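(* For every collection $\mathcal D_1$ of pairwise disjoint dyadic strips in $\mathcal D$, $\mu(\bigcup_{D\in\mathcal D_1}D)=\sum_{D\in\mathcal D_1}\mu(D)=\sum_{D\in\mathcal D_1}|\pi(D)|$. For every collection $\mathcal T_1$ of pairwise disjoint dyadic trees in $\mathcal T$, $\nu(\bigcup_{T\in\mathcal T_1}T)=\sum_{T\in\mathcal T_1}\nu(T)=\sum_{T\in\mathcal T_1}|\pi(T)|$. Moreover, for every collection $\mathcal D_1$ of pairwise disjoint strips in $\mathcal D$ and every tree $T\in\mathcal T$, $\nu(T\cap\bigcup_{D\in\mathcal D_1}D)=\sum_{D\in\mathcal D_1}\nu(T\cap D)$.
   Context: $\pi$ is the projection onto the first coordinate and $|\cdot|$ Lebesgue measure. Dyadic intervals: $I(m,l)=(2^lm,2^l(m+1)]$. Tiles: $H(m,l,n)=I(m,l)\times(2^{l-1},2^l]\times I(n,-l)$. Strips $D(m,l)=I(m,l)\times(0,2^l]\times\mathbb R$ form $\mathcal D$, with $\sigma(D(m,l))=2^l$. Trees $T(m,l,n)=\bigcup_{l'\le l}\bigcup_{m':\,I(m',l')\subseteq I(m,l)}H(m',l',N(n,l'))$, with $N(n,l')$ the integer such that $I(n,-l)\subseteq I(N(n,l'),-l')$, form $\mathcal T$, with $\tau(T(m,l,n))=2^l$. On $X=\mathbb R\times(0,\infty)\times\mathbb R$, $\mu(A)=\inf\{\sum_{S\in\mathcal S'}\sigma(S):\mathcal S'\subseteq\mathcal D,\ A\subseteq\bigcup\mathcal S'\}$ and $\nu(A)=\inf\{\sum_{S\in\mathcal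 S'}\tau(S):\mathcal S'\subseteq\mathcal T,\ A\subseteq\bigcup\mathcal S'\}$. *)

theory Defs
  imports "HOL-Analysis.Analysis"
begin

type_synonym point = "real \<times> real \<times> real"

definition Xspace :: "point set" where
  "Xspace = UNIV \<times> {0<..} \<times> UNIV"

definition dyI :: "int \<Rightarrow> int \<Rightarrow> real set" where
  "dyI m l = {2 powr (real_of_int l) * real_of_int m <.. 2 powr (real_of_int l) * (real_of_int m + 1)}"

definition tile :: "int \<Rightarrow> int \<Rightarrow> int \<Rightarrow> point set" where
  "tile m l n = dyI m l \<times> {2 powr (real_of_int l - 1) <.. 2 powr (real_of_int l)} \<times> dyI n (- l)"

definition strip :: "int \<Rightarrow> int \<Rightarrow> point set" where
  "strip m l = dyI m l \<times> {0 <.. 2 powr (real_of_int l)} \<times> UNIV"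

definition strips :: "point set set" where
  "strips = {strip m l | m l. True}"

definition sigma :: "point set \<Rightarrow> ennreal" where
  "sigma S = ennreal (2 powr (real_of_int (THE l. \<exists>m. S = strip m l)))"

definition Nidx :: "int \<Rightarrow> int \<Rightarrow> int \<Rightarrow> int" where
  "Nidx n l l' = (THE k. dyI n (- l) \<subseteq> dyI k (- l'))"

definition tree :: "int \<Rightarrow> int \<Rightarrow> int \<Rightarrow> point set" where
  "tree m l n = \<Union> {tile m' l' (Nidx n l l') | m' l'. l' \<le> l \<and> dyI m' l' \<subseteq> dyI m l}"

definition trees :: "point set set" where
  "trees = {tree m l n | m l n. True}"

definition tau :: "point set \<Rightarrow> ennreal" where
  "tau T = ennreal (2 powr (real_of_int (THE l. \<exists>m n. T = tree m l n)))"

definition mu :: "point set \<Rightarrow> ennreal" where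
  "mu A = Inf {(\<Sum>\<^sub>\<infinity>S\<in>C. sigma S) | C. C \<subseteq> strips \<and> A \<subseteq> \<Union> C}"

definition nu :: "point set \<Rightarrow> ennreal" where
  "nu A = Inf {(\<Sum>\<^sub>\<infinity>S\<in>C. tau S) | C. C \<subseteq> trees \<and> A \<subseteq> \<Union> C}"

definition proj :: "point set \<Rightarrow> real set" where
  "proj A = fst ` A"

end

theory Submission
  imports Defs
begin


definition idx :: "int \<Rightarrow> real \<Rightarrow> int" where
  "idx l x = \<lceil>x / 2 powr (real_of_int l)\<rceil> - 1"

definition pt :: "int \<Rightarrow> int \<Rightarrow> real" where
  "pt l m = 2 powr (real_of_int l) * (real_of_int m + 1)"

lemma mem_dyI: "x \<in> dyI m l \<longleftrightarrow> idx l x = m"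
proof -
  have p: "(2::real) powr real_of_int l > 0" by simp
  have "x \<in> dyI m l \<longleftrightarrow> real_of_int m < x / 2 powr l \<and> x / 2 powr l \<le> real_of_int m + 1"
    unfolding dyI_def using p by (auto simp: field_simps)
  also have "\<dots> \<longleftrightarrow> \<lceil>x / 2 powr l\<rceil> = m + 1"
    by (simp add: ceiling_eq_iff)
  finally show ?thesis unfolding idx_def by auto
qed

lemma idx_pt[simp]: "idx l (pt l m) = m"
  unfolding idx_def pt_def by simp

lemma pt_mem: "pt l m \<in> dyI m l"
  by (simp add: mem_dyI)

lemma ceil_div_aux:
  fixes y :: real and K :: int
  assumes K: "K > 0"
  shows "\<lceil>y / K\<rceil> - 1 = (\<lceil>y\<rceil> - 1) div K"
proof -
  define j where "j = \<lceil>y\<rceil> - 1"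
  define q where "q = j div K"
  define r where "r = j mod K"
  have jq: "j = q * K + r" unfolding q_def r_def by simp
  have r0: "0 \<le> r" "r < K" unfolding r_def using K by auto
  have jy: "real_of_int j < y" "y \<le> real_of_int j + 1" unfolding j_def by linarith+
  have Kr: "real_of_int K > 0" using K by simp
  have "real_of_int q < y / K"
  proof -
    have "real_of_int q * K \<le> real_of_int j" using jq r0 by (simp add: algebra_simps)
    hence "real_of_int q * K < y" using jy by linarith
    thus ?thesis using Kr by (simp add: field_simps)
  qed
  moreover have "y / K \<le> real_of_int q + 1"
  proof -
    have "j + 1 \<le> q * K + K" using jq r0 by simp
    hence "real_of_int j + 1 \<le> (real_of_int q + 1) * K"
      by (metis (mono_tags, opaque_lifting) distrib_right mult_1 of_int_add of_int_le_iff of_int_mult of_int_1)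
    hence "y \<le> (real_of_int q + 1) * K" using jy by linarith
    thus ?thesis using Kr by (simp add: field_simps)
  qed
  ultimately have "\<lceil>y / K\<rceil> = q + 1" by (simp add: ceiling_eq_iff)
  thus ?thesis unfolding q_def j_def by simp
qed

lemma idx_div:
  assumes "l' \<le> l"
  shows "idx l x = idx l' x div 2 ^ nat (l - l')"
proof -
  have e: "(2::real) powr real_of_int l = 2 powr real_of_int l' * real_of_int ((2::int) ^ nat (l - l'))"
  proof -
    have "(2::real) powr real_of_int l = 2 powr (real_of_int l' + real (nat (l - l')))"
      using assms by simp
    also have "\<dots> = 2 powr real_of_int l' * 2 ^ nat (l - l')"
      by (simp add: powr_add powr_realpow)
    finally show ?thesis by simp
  qed
  have "x / 2 powr real_of_int l = (x / 2 powr real_of_int l') / real_of_int ((2::int) ^ nat (l - l'))"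
    by (simp add: e)
  thus ?thesis unfolding idx_def
    by (metis ceil_div_aux zero_less_numeral zero_less_power)
qed



definition lev :: "real \<Rightarrow> int" where "lev s = \<lceil>log 2 s\<rceil>"

lemma lev_le: "s > 0 \<Longrightarrow> lev s \<le> l \<longleftrightarrow> s \<le> 2 powr real_of_int l"
  unfolding lev_def by (simp add: ceiling_le_iff log_le_iff)

lemma lev_eq: "s > 0 \<Longrightarrow> lev s = l \<longleftrightarrow> 2 powr (real_of_int l - 1) < s \<and> s \<le> 2 powr real_of_int l"
  unfolding lev_def by (simp add: ceiling_eq_iff log_le_iff less_log_iff)

lemma lev_pow[simp]: "lev (2 powr real_of_int l) = l"
  unfolding lev_def by simp

lemma dyI_sub: "l' \<le> l \<Longrightarrow> idx l x = m \<Longrightarrow> dyI (idx l' x) l' \<subseteq> dyI m l"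
  by (auto simp: mem_dyI idx_div[of l' l])

lemma mem_tile: "p \<in> tile m l n \<longleftrightarrow>
   idx l (fst p) = m \<and> fst (snd p) > 0 \<and> lev (fst (snd p)) = l \<and> idx (- l) (snd (snd p)) = n"
proof (cases p)
  case (fields x s xi)
  have pos: "2 powr (real_of_int l - 1) > 0" by simp
  have "p \<in> tile m l n \<longleftrightarrow> idx l x = m \<and> (2 powr (real_of_int l - 1) < s \<and> s \<le> 2 powr real_of_int l) \<and> idx (-l) xi = n"
    unfolding tile_def by (simp add: fields mem_dyI)
  also have "\<dots> \<longleftrightarrow> idx l x = m \<and> s > 0 \<and> lev s = l \<and> idx (-l) xi = n"
    using pos lev_eq[of s l] by (metis less_trans)
  finally show ?thesis by (simp add: fields)
qed

lemma mem_strip: "p \<in> strip m l \<longleftrightarrow>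
   idx l (fst p) = m \<and> fst (snd p) > 0 \<and> lev (fst (snd p)) \<le> l"
  unfolding strip_def by (cases p) (auto simp: mem_dyI lev_le)

lemma Nidx_eq: assumes "l' \<le> l" shows "Nidx n l l' = n div 2 ^ nat (l - l')"
proof -
  have iff: "dyI n (- l) \<subseteq> dyI k (- l') \<longleftrightarrow> k = n div 2 ^ nat (l - l')" for k
  proof
    assume "dyI n (- l) \<subseteq> dyI k (- l')"
    hence "pt (-l) n \<in> dyI k (- l')" using pt_mem by blast
    hence "k = idx (-l') (pt (-l) n)" by (simp add: mem_dyI)
    also have "\<dots> = n div 2 ^ nat (l - l')" using idx_div[of "-l" "-l'" "pt (-l) n"] assms by simp
    finally show "k = n div 2 ^ nat (l - l')" .
  next
    assume k: "k = n div 2 ^ nat (l - l')"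
    show "dyI n (- l) \<subseteq> dyI k (- l')"
      using idx_div[of "-l" "-l'"] assms k by (auto simp: mem_dyI)
  qed
  show ?thesis unfolding Nidx_def iff by simp
qed

lemma mem_tree: "p \<in> tree m l n \<longleftrightarrow>
   fst (snd p) > 0 \<and> lev (fst (snd p)) \<le> l \<and> idx l (fst p) = m \<and>
   idx (- lev (fst (snd p))) (snd (snd p)) = n div 2 ^ nat (l - lev (fst (snd p)))"
proof (cases p)
  case (fields x s xi)
  show ?thesis
  proof
    assume "p \<in> tree m l n"
    then obtain m' l' where ml: "l' \<le> l" "dyI m' l' \<subseteq> dyI m l" "p \<in> tile m' l' (Nidx n l l')"
      unfolding tree_def by auto
    hence "idx l' x = m'" "s > 0" "lev s = l'" "idx (-l') xi = Nidx n l l'"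
      by (auto simp: mem_tile fields)
    moreover have "x \<in> dyI m l" using ml(2) \<open>idx l' x = m'\<close> by (auto simp: mem_dyI)
    ultimately show "fst (snd p) > 0 \<and> lev (fst (snd p)) \<le> l \<and> idx l (fst p) = m \<and>
      idx (- lev (fst (snd p))) (snd (snd p)) = n div 2 ^ nat (l - lev (fst (snd p)))"
      using ml(1) by (simp add: fields mem_dyI Nidx_eq)
  next
    assume a: "fst (snd p) > 0 \<and> lev (fst (snd p)) \<le> l \<and> idx l (fst p) = m \<and>
      idx (- lev (fst (snd p))) (snd (snd p)) = n div 2 ^ nat (l - lev (fst (snd p)))"
    define l' where "l' = lev s"
    have "dyI (idx l' x) l' \<subseteq> dyI m l" using a dyI_sub[of l' l x m] by (simp add: fields l'_def)
    moreover have "p \<in> tile (idx l' x) l' (Nidx n l l')"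
      using a by (simp add: mem_tile fields l'_def Nidx_eq)
    ultimately show "p \<in> tree m l n" unfolding tree_def using a
      by (auto simp: fields l'_def)
  qed
qed



lemma dyI_Ioc: "dyI m l = {2 powr real_of_int l * real_of_int m <.. 2 powr real_of_int l * real_of_int m + 2 powr real_of_int l}"
  unfolding dyI_def by (simp add: algebra_simps)

lemma emeasure_dyI: "emeasure lborel (dyI m l) = ennreal (2 powr real_of_int l)"
  unfolding dyI_Ioc by simp

lemma dyI_sets[simp]: "dyI m l \<in> sets borel"
  unfolding dyI_def by simp

lemma proj_strip: "proj (strip m l) = dyI m l"
proof -
  have "{0<..2 powr real_of_int l} \<times> (UNIV::real set) \<noteq> {}" by simp
  thus ?thesis unfolding proj_def strip_def by (simp add: fst_image_times)
qed

lemma proj_tree: "proj (tree m l n) = dyI m l"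
proof
  show "proj (tree m l n) \<subseteq> dyI m l"
    unfolding proj_def by (auto simp: mem_tree mem_dyI)
  show "dyI m l \<subseteq> proj (tree m l n)"
  proof
    fix x assume "x \<in> dyI m l"
    hence "(x, 2 powr real_of_int l, pt (-l) n) \<in> tree m l n"
      by (simp add: mem_tree mem_dyI)
    thus "x \<in> proj (tree m l n)" unfolding proj_def by force
  qed
qed

lemma dyI_eq_l: "dyI m l = dyI m' l' \<Longrightarrow> l = l'"
proof -
  assume "dyI m l = dyI m' l'"
  hence "(2::real) powr real_of_int l = 2 powr real_of_int l'"
    using emeasure_dyI[of m l] emeasure_dyI[of m' l'] by simp
  thus "l = l'" using powr_inj[of 2 "real_of_int l" "real_of_int l'"] by simp
qed

lemma sigma_strip: "sigma (strip m l) = ennreal (2 powr real_of_int l)"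
proof -
  have "(THE l'. \<exists>m'. strip m l = strip m' l') = l"
  proof (rule the_equality)
    fix l' assume "\<exists>m'. strip m l = strip m' l'"
    then obtain m' where "strip m l = strip m' l'" by blast
    hence "proj (strip m l) = proj (strip m' l')" by simp
    thus "l' = l" by (simp add: proj_strip) (metis dyI_eq_l)
  qed auto
  thus ?thesis unfolding sigma_def by simp
qed

lemma tau_tree: "tau (tree m l n) = ennreal (2 powr real_of_int l)"
proof -
  have "(THE l'. \<exists>m' n'. tree m l n = tree m' l' n') = l"
  proof (rule the_equality)
    fix l' assume "\<exists>m' n'. tree m l n = tree m' l' n'"
    then obtain m' n' where "tree m l n = tree m' l' n'" by blast
    hence "proj (tree m l n) = proj (tree m' l' n')" by simp
    thus "l' = l" by (simp add: proj_tree) (metis dyI_eq_l)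
  qed auto
  thus ?thesis unfolding tau_def by simp
qed

lemma sigma_proj: "D \<in> strips \<Longrightarrow> sigma D = emeasure lborel (proj D) \<and> proj D \<in> sets lborel"
  unfolding strips_def by (auto simp: sigma_strip proj_strip emeasure_dyI)

lemma tau_proj: "T \<in> trees \<Longrightarrow> tau T = emeasure lborel (proj T) \<and> proj T \<in> sets lborel"
  unfolding trees_def by (auto simp: tau_tree proj_tree emeasure_dyI)

lemma strip_top: "(pt l m, 2 powr real_of_int l, 0) \<in> strip m l"
  by (simp add: mem_strip)

lemma tree_top: "(pt l m, 2 powr real_of_int l, pt (-l) n) \<in> tree m l n"
  by (simp add: mem_tree)

lemma strip_top_sub: "(pt l m, 2 powr real_of_int l, z) \<in> strip M L \<Longrightarrow> proj (strip m l) \<subseteq> proj (strip M L)"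
  unfolding proj_strip using dyI_sub[of l L "pt l m" M] by (simp add: mem_strip)

lemma tree_top_sub: "(pt l m, 2 powr real_of_int l, z) \<in> tree M L N \<Longrightarrow> proj (tree m l n) \<subseteq> proj (tree M L N)"
  unfolding proj_tree using dyI_sub[of l L "pt l m" M] by (simp add: mem_tree)

lemma strip_disj_proj: "strip m l \<inter> strip m' l' = {} \<Longrightarrow> proj (strip m l) \<inter> proj (strip m' l') = {}"
proof (rule ccontr)
  assume d: "strip m l \<inter> strip m' l' = {}" and "proj (strip m l) \<inter> proj (strip m' l') \<noteq> {}"
  then obtain x where x: "x \<in> dyI m l" "x \<in> dyI m' l'" by (auto simp: proj_strip)
  have "(x, min (2 powr real_of_int l) (2 powr real_of_int l'), 0) \<in> strip m l \<inter> strip m' l'"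
    using x unfolding strip_def by auto
  thus False using d by auto
qed

lemma div_div_pow: "a \<le> b \<Longrightarrow> b \<le> c \<Longrightarrow> (n::int) div 2 ^ nat (c - b) div 2 ^ nat (b - a) = n div 2 ^ nat (c - a)"
proof -
  assume "a \<le> b" "b \<le> c"
  hence "nat (c - a) = nat (c - b) + nat (b - a)" by simp
  thus ?thesis by (simp add: power_add zdiv_zmult2_eq)
qed

lemma tree_top_overlap:
  assumes t1: "(pt l1 m1, 2 powr real_of_int l1, pt (-l1) n1) \<in> tree M L N"
    and t2: "(pt l2 m2, 2 powr real_of_int l2, pt (-l2) n2) \<in> tree M L N"
    and le: "l1 \<le> l2" and ov: "dyI m1 l1 \<inter> dyI m2 l2 \<noteq> {}"
  shows "(pt l1 m1, 2 powr real_of_int l1, pt (-l1) n1) \<in> tree m2 l2 n2"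
proof -
  from t1 have a1: "l1 \<le> L" "n1 = N div 2 ^ nat (L - l1)" by (auto simp: mem_tree)
  from t2 have a2: "l2 \<le> L" "n2 = N div 2 ^ nat (L - l2)" by (auto simp: mem_tree)
  from ov obtain y where "y \<in> dyI m1 l1" "y \<in> dyI m2 l2" by blast
  hence y: "idx l1 y = m1" "idx l2 y = m2" by (simp_all add: mem_dyI)
  have "idx l2 (pt l1 m1) = m2"
    using idx_div[OF le, of "pt l1 m1"] idx_div[OF le, of y] y by simp
  moreover have "n2 div 2 ^ nat (l2 - l1) = n1"
    using a1 a2 le div_div_pow[of l1 l2 L N] by simp
  ultimately show ?thesis using le by (simp add: mem_tree)
qed

lemma tree_strip_int:
  "tree m l n \<inter> strip M L = {} \<or> tree m l n \<inter> strip M L \<in> trees"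
proof (cases "l \<le> L")
  case True
  show ?thesis
  proof (cases "M = m div 2 ^ nat (L - l)")
    case True
    have "tree m l n \<subseteq> strip M L"
      using \<open>l \<le> L\<close> True idx_div[OF \<open>l \<le> L\<close>] by (auto simp: mem_tree mem_strip)
    hence "tree m l n \<inter> strip M L = tree m l n" by blast
    thus ?thesis unfolding trees_def by auto
  next
    case False
    have "tree m l n \<inter> strip M L = {}"
      using \<open>l \<le> L\<close> False idx_div[OF \<open>l \<le> L\<close>] by (auto simp: mem_tree mem_strip)
    thus ?thesis by blast
  qed
next
  case False
  hence le: "L \<le> l" by simp
  show ?thesis
  proof (cases "M div 2 ^ nat (l - L) = m")
    case True
    have "tree m l n \<inter> strip M L = tree M L (n div 2 ^ nat (l - L))"
    proof (rule set_eqI)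
      fix p :: point
      obtain x s xi where p: "p = (x, s, xi)" by (cases p)
      show "p \<in> tree m l n \<inter> strip M L \<longleftrightarrow> p \<in> tree M L (n div 2 ^ nat (l - L))"
        using le True idx_div[OF le, of x] div_div_pow[of "lev s" L l n]
        by (auto simp: mem_tree mem_strip p)
    qed
    thus ?thesis unfolding trees_def by auto
  next
    case False
    have "tree m l n \<inter> strip M L = {}"
      using le False idx_div[OF le] by (auto simp: mem_tree mem_strip)
    thus ?thesis by blast
  qed
qed



lemma assign_bound:
  fixes P C :: "point set set" and w :: "point set \<Rightarrow> ennreal" and a :: "point set \<Rightarrow> point set"
  assumes aC: "\<And>D. D \<in> P \<Longrightarrow> a D \<in> C" and sub: "\<And>D. D \<in> P \<Longrightarrow> proj D \<subseteq> proj (a D)"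
    and dj: "\<And>D D'. D \<in> P \<Longrightarrow> D' \<in> P \<Longrightarrow> D \<noteq> D' \<Longrightarrow> a D = a D' \<Longrightarrow> proj D \<inter> proj D' = {}"
    and w: "\<And>D. D \<in> P \<union> C \<Longrightarrow> w D = emeasure lborel (proj D) \<and> proj D \<in> sets lborel"
  shows "(\<Sum>\<^sub>\<infinity>D\<in>P. w D) \<le> (\<Sum>\<^sub>\<infinity>S\<in>C. w S)"
proof (rule infsum_le_finite_sums)
  show "w summable_on P" by (rule nonneg_summable_on_complete) simp
  fix F assume F: "finite F" "F \<subseteq> P"
  have "sum w F = (\<Sum>S\<in>a`F. sum w {D\<in>F. a D = S})" by (rule sum.image_gen[OF F(1)])
  also have "\<dots> \<le> (\<Sum>S\<in>a`F. w S)"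
  proof (rule sum_mono)
    fix S assume S: "S \<in> a`F"
    let ?G = "{D\<in>F. a D = S}"
    have "sum w ?G = (\<Sum>D\<in>?G. emeasure lborel (proj D))" using w F by (intro sum.cong) auto
    also have "\<dots> = emeasure lborel (\<Union>D\<in>?G. proj D)"
    proof (rule sum_emeasure)
      show "disjoint_family_on proj ?G" unfolding disjoint_family_on_def
      proof (intro ballI impI)
        fix D D' assume "D \<in> ?G" "D' \<in> ?G" "D \<noteq> D'"
        thus "proj D \<inter> proj D' = {}" using dj[of D D'] F by auto
      qed
    qed (use w F in auto)
    also have "\<dots> \<le> emeasure lborel (proj S)"
    proof -
      have "(\<Union>D\<in>?G. proj D) \<subseteq> proj S" using sub F by fastforce
      moreover have "proj S \<in> sets lborel" using S aC w F by auto
      ultimately show ?thesis by (rule emeasure_mono)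
    qed
    also have "\<dots> = w S" using w S aC F by auto
    finally show "sum w ?G \<le> w S" .
  qed
  also have "\<dots> = (\<Sum>\<^sub>\<infinity>S\<in>a`F. w S)" using F by simp
  also have "\<dots> \<le> (\<Sum>\<^sub>\<infinity>S\<in>C. w S)"
    by (rule infsum_mono_neutral) (use F aC in \<open>auto intro: nonneg_summable_on_complete\<close>)
  finally show "sum w F \<le> (\<Sum>\<^sub>\<infinity>S\<in>C. w S)" .
qed

lemma mu_lower:
  assumes P: "P \<subseteq> strips" "disjoint P" and C: "C \<subseteq> strips" "\<Union>P \<subseteq> \<Union>C"
  shows "(\<Sum>\<^sub>\<infinity>D\<in>P. sigma D) \<le> (\<Sum>\<^sub>\<infinity>S\<in>C. sigma S)"
proof -
  have ex: "\<exists>S. S \<in> C \<and> proj D \<subseteq> proj S" if D: "D \<in> P" for D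
  proof -
    obtain m l where Dm: "D = strip m l" using D P unfolding strips_def by auto
    have "(pt l m, 2 powr real_of_int l, 0) \<in> \<Union>C" using strip_top[of l m] Dm D C by blast
    then obtain S where S: "S \<in> C" "(pt l m, 2 powr real_of_int l, 0) \<in> S" by blast
    obtain M L where "S = strip M L" using S C unfolding strips_def by auto
    thus ?thesis using S strip_top_sub Dm by blast
  qed
  define a where "a D = (SOME S. S \<in> C \<and> proj D \<subseteq> proj S)" for D
  have a: "a D \<in> C \<and> proj D \<subseteq> proj (a D)" if "D \<in> P" for D
    unfolding a_def using someI_ex[OF ex[OF that]] .
  show ?thesis
  proof (rule assign_bound[where a=a])
    show "\<And>D. D \<in> P \<Longrightarrow> a D \<in> C" "\<And>D. D \<in> P \<Longrightarrow> proj D \<subseteq> proj (a D)" using a by auto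
    show "proj D \<inter> proj D' = {}" if DD: "D \<in> P" "D' \<in> P" "D \<noteq> D'" for D D'
    proof -
      have "D \<inter> D' = {}" using P(2) DD unfolding disjoint_def by blast
      moreover have "D \<in> strips" "D' \<in> strips" using DD P by auto
      then obtain m l m' l' where "D = strip m l" "D' = strip m' l'"
        unfolding strips_def by blast
      ultimately show ?thesis using strip_disj_proj by simp
    qed
    show "\<And>D. D \<in> P \<union> C \<Longrightarrow> sigma D = emeasure lborel (proj D) \<and> proj D \<in> sets lborel"
      using P C sigma_proj by blast
  qed
qed

lemma nu_lower:
  assumes P: "P \<subseteq> trees" "disjoint P" and C: "C \<subseteq> trees" "\<Union>P \<subseteq> \<Union>C"
  shows "(\<Sum>\<^sub>\<infinity>D\<in>P. tau D) \<le> (\<Sum>\<^sub>\<infinity>S\<in>C. tau S)"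
proof -
  let ?Q = "\<lambda>D S. S \<in> C \<and> (\<exists>m l n. D = tree m l n \<and> (pt l m, 2 powr real_of_int l, pt (-l) n) \<in> S)"
  have ex: "\<exists>S. ?Q D S" if D: "D \<in> P" for D
  proof -
    obtain m l n where Dm: "D = tree m l n" using D P unfolding trees_def by auto
    have "(pt l m, 2 powr real_of_int l, pt (-l) n) \<in> \<Union>C" using tree_top[of l m n] Dm D C by blast
    thus ?thesis using Dm by blast
  qed
  define a where "a D = (SOME S. ?Q D S)" for D
  have a: "?Q D (a D)" if "D \<in> P" for D
    unfolding a_def using someI_ex[OF ex[OF that]] .
  show ?thesis
  proof (rule assign_bound[where a=a])
    show "\<And>D. D \<in> P \<Longrightarrow> a D \<in> C" using a by auto
    show "proj D \<subseteq> proj (a D)" if D: "D \<in> P" for D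
    proof -
      obtain m l n where "D = tree m l n" "(pt l m, 2 powr real_of_int l, pt (-l) n) \<in> a D"
        using a[OF D] by blast
      moreover obtain M L N where "a D = tree M L N" using a[OF D] C unfolding trees_def by blast
      ultimately show ?thesis using tree_top_sub by metis
    qed
    show "proj D \<inter> proj D' = {}" if DD: "D \<in> P" "D' \<in> P" "D \<noteq> D'" "a D = a D'" for D D'
    proof (rule ccontr)
      assume ov: "proj D \<inter> proj D' \<noteq> {}"
      have dj: "D \<inter> D' = {}" using P(2) DD unfolding disjoint_def by blast
      obtain m1 l1 n1 where 1: "D = tree m1 l1 n1" "(pt l1 m1, 2 powr real_of_int l1, pt (-l1) n1) \<in> a D"
        using a[OF DD(1)] by blast
      obtain m2 l2 n2 where 2: "D' = tree m2 l2 n2" "(pt l2 m2, 2 powr real_of_int l2, pt (-l2) n2) \<in> a D"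
        using a[OF DD(2)] DD(4) by auto
      obtain M L N where S: "a D = tree M L N" using a[OF DD(1)] C unfolding trees_def by blast
      have ov': "dyI m1 l1 \<inter> dyI m2 l2 \<noteq> {}" using ov 1 2 by (simp add: proj_tree)
      show False
      proof (cases "l1 \<le> l2")
        case True
        have "(pt l1 m1, 2 powr real_of_int l1, pt (-l1) n1) \<in> D'"
          using tree_top_overlap[of l1 m1 n1 M L N l2 m2 n2] 1 2 S True ov' by simp
        moreover have "(pt l1 m1, 2 powr real_of_int l1, pt (-l1) n1) \<in> D" using 1 tree_top by simp
        ultimately show False using dj by blast
      next
        case False
        have "(pt l2 m2, 2 powr real_of_int l2, pt (-l2) n2) \<in> D"
          using tree_top_overlap[of l2 m2 n2 M L N l1 m1 n1] 1 2 S False ov' by (simp add: Int_commute)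
        moreover have "(pt l2 m2, 2 powr real_of_int l2, pt (-l2) n2) \<in> D'" using 2 tree_top by simp
        ultimately show False using dj by blast
      qed
    qed
    show "\<And>D. D \<in> P \<union> C \<Longrightarrow> tau D = emeasure lborel (proj D) \<and> proj D \<in> sets lborel"
      using P C tau_proj by blast
  qed
qed



lemma mu_union: assumes "D1 \<subseteq> strips" "disjoint D1"
  shows "mu (\<Union>D1) = (\<Sum>\<^sub>\<infinity>D\<in>D1. sigma D)"
  unfolding mu_def
proof (rule antisym)
  show "Inf {(\<Sum>\<^sub>\<infinity>S\<in>C. sigma S) | C. C \<subseteq> strips \<and> \<Union>D1 \<subseteq> \<Union> C} \<le> (\<Sum>\<^sub>\<infinity>D\<in>D1. sigma D)"
    by (rule Inf_lower) (use assms in blast)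
  show "(\<Sum>\<^sub>\<infinity>D\<in>D1. sigma D) \<le> Inf {(\<Sum>\<^sub>\<infinity>S\<in>C. sigma S) | C. C \<subseteq> strips \<and> \<Union>D1 \<subseteq> \<Union> C}"
    using mu_lower[OF assms] by (auto intro!: Inf_greatest)
qed

lemma nu_union: assumes "T1 \<subseteq> trees" "disjoint T1"
  shows "nu (\<Union>T1) = (\<Sum>\<^sub>\<infinity>D\<in>T1. tau D)"
  unfolding nu_def
proof (rule antisym)
  show "Inf {(\<Sum>\<^sub>\<infinity>S\<in>C. tau S) | C. C \<subseteq> trees \<and> \<Union>T1 \<subseteq> \<Union> C} \<le> (\<Sum>\<^sub>\<infinity>D\<in>T1. tau D)"
    by (rule Inf_lower) (use assms in blast)
  show "(\<Sum>\<^sub>\<infinity>D\<in>T1. tau D) \<le> Inf {(\<Sum>\<^sub>\<infinity>S\<in>C. tau S) | C. C \<subseteq> trees \<and> \<Union>T1 \<subseteq> \<Union> C}"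
    using nu_lower[OF assms] by (auto intro!: Inf_greatest)
qed

lemma mu_single: "D \<in> strips \<Longrightarrow> mu D = sigma D"
  using mu_union[of "{D}"] by (simp add: disjoint_def)

lemma nu_single: "T \<in> trees \<Longrightarrow> nu T = tau T"
  using nu_union[of "{T}"] by (simp add: disjoint_def)

lemma nu_empty: "nu {} = 0"
proof -
  have "nu {} \<le> (\<Sum>\<^sub>\<infinity>S\<in>{}. tau S)" unfolding nu_def by (rule Inf_lower) blast
  thus ?thesis by simp
qed

theorem lemma4p4:
  shows "(\<forall>D1. D1 \<subseteq> strips \<and> disjoint D1 \<longrightarrow>
            mu (\<Union> D1) = (\<Sum>\<^sub>\<infinity>D\<in>D1. mu D) \<and>
            (\<Sum>\<^sub>\<infinity>D\<in>D1. mu D) = (\<Sum>\<^sub>\<infinity>D\<in>D1. emeasure lborel (proj D)))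
       \<and> (\<forall>T1. T1 \<subseteq> trees \<and> disjoint T1 \<longrightarrow>
            nu (\<Union> T1) = (\<Sum>\<^sub>\<infinity>T\<in>T1. nu T) \<and>
            (\<Sum>\<^sub>\<infinity>T\<in>T1. nu T) = (\<Sum>\<^sub>\<infinity>T\<in>T1. emeasure lborel (proj T)))
       \<and> (\<forall>D1 T. D1 \<subseteq> strips \<and> disjoint D1 \<and> T \<in> trees \<longrightarrow>
            nu (T \<inter> \<Union> D1) = (\<Sum>\<^sub>\<infinity>D\<in>D1. nu (T \<inter> D)))"
proof (intro conjI allI impI)
  fix D1 assume A: "D1 \<subseteq> strips \<and> disjoint D1"
  have e1: "(\<Sum>\<^sub>\<infinity>D\<in>D1. mu D) = (\<Sum>\<^sub>\<infinity>D\<in>D1. sigma D)"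
    by (rule infsum_cong) (use A mu_single in blast)
  show "mu (\<Union> D1) = (\<Sum>\<^sub>\<infinity>D\<in>D1. mu D)" using mu_union A e1 by simp
  show "(\<Sum>\<^sub>\<infinity>D\<in>D1. mu D) = (\<Sum>\<^sub>\<infinity>D\<in>D1. emeasure lborel (proj D))"
    unfolding e1 by (rule infsum_cong) (use A sigma_proj in blast)
next
  fix T1 assume A: "T1 \<subseteq> trees \<and> disjoint T1"
  have e1: "(\<Sum>\<^sub>\<infinity>D\<in>T1. nu D) = (\<Sum>\<^sub>\<infinity>D\<in>T1. tau D)"
    by (rule infsum_cong) (use A nu_single in blast)
  show "nu (\<Union> T1) = (\<Sum>\<^sub>\<infinity>D\<in>T1. nu D)" using nu_union A e1 by simp
  show "(\<Sum>\<^sub>\<infinity>D\<in>T1. nu D) = (\<Sum>\<^sub>\<infinity>D\<in>T1. emeasure lborel (proj D))"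
    unfolding e1 by (rule infsum_cong) (use A tau_proj in blast)
next
  fix D1 T assume A: "D1 \<subseteq> strips \<and> disjoint D1 \<and> T \<in> trees"
  define J where "J = {D\<in>D1. T \<inter> D \<noteq> {}}"
  define P where "P = (\<lambda>D. T \<inter> D) ` J"
  have Pt: "P \<subseteq> trees"
  proof
    fix X assume "X \<in> P"
    then obtain D where D: "D \<in> J" "X = T \<inter> D" unfolding P_def by blast
    obtain m l n where "T = tree m l n" using A unfolding trees_def by blast
    moreover obtain M L where "D = strip M L" using D A unfolding J_def strips_def by blast
    ultimately show "X \<in> trees" using tree_strip_int[of m l n M L] D unfolding J_def by auto
  qed
  have djD: "D \<inter> D' = {}" if "D \<in> D1" "D' \<in> D1" "D \<noteq> D'" for D D'
    using A that unfolding disjoint_def by blast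
  have inj: "inj_on (\<lambda>D. T \<inter> D) J"
  proof (rule inj_onI)
    fix D D' assume "D \<in> J" "D' \<in> J" "T \<inter> D = T \<inter> D'"
    thus "D = D'" using djD[of D D'] unfolding J_def by blast
  qed
  have Pd: "disjoint P"
    unfolding disjoint_def P_def J_def using djD by blast
  have U: "\<Union>P = T \<inter> \<Union>D1" unfolding P_def J_def by blast
  have "nu (T \<inter> \<Union>D1) = (\<Sum>\<^sub>\<infinity>X\<in>P. tau X)" using nu_union[OF Pt Pd] U by simp
  also have "\<dots> = (\<Sum>\<^sub>\<infinity>X\<in>P. nu X)" by (rule infsum_cong) (use Pt nu_single in auto)
  also have "\<dots> = (\<Sum>\<^sub>\<infinity>D\<in>J. nu (T \<inter> D))" unfolding P_def using infsum_reindex[OF inj] by (simp add: comp_def)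
  also have "\<dots> = (\<Sum>\<^sub>\<infinity>D\<in>D1. nu (T \<inter> D))"
    by (rule infsum_cong_neutral) (auto simp: J_def nu_empty)
  finally show "nu (T \<inter> \<Union> D1) = (\<Sum>\<^sub>\<infinity>D\<in>D1. nu (T \<inter> D))" .
qed

end
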